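(* Let $R$ be a left noetherian domain and let $A=\sigma(R)\langle x_1,\dots,x_n\rangle$ be a quasi-commutative bijective skew PBW extension of $R$. (i) If $f=c\,x^{\alpha}h\in A$, where $c\in R^*$ is a unit of $R$ that is normal in $R$ (i.e. $cR=Rc$), $x^\alpha\in\mathrm{Mon}(A)$, and $h\in Z(A)$ (the center of $A$), then $f$ is normal in $A$. (ii) If $f=c_1x^{\alpha_1}+\cdots+c_tx^{\alpha_t}\in A$ with $c_i\in R\setminus\{0\}$ and pairwise distinct standard monomials $x^{\alpha_1},\dots,x^{\alpha_t}$, and $f$ is normal in $A$, then each $c_i$ is normal in $R$, i.e. $c_iR=Rc_i$ for every $1\le i\le t$.
   Context: Skew PBW extension: a ring $A$ is a skew PBW extension of a ring $R$, written $A=\sigma(R)\langle x_1,\dots,x_n\rangle$, if (1) $R\subseteq A$ is a subring; (2) there are $x_1,\dots,x_n\in A$ such that $A$ is a free left $R$-module with basis $\mathrm{Mon}(A)=\{x^\alpha=x_1^{\alpha_1}\cdots x_n^{\alpha_n}:\alpha\in\mathbb N^n\}$ (the standard monomials); (3) for every $i$ and every $r\in R\setminus\{0\}$ there is $c_{i,r}\in R\setminus\{0\}$ with $x_ir-c_{i,r}x_i\in R$; (4) for every $i,j$ there is $c_{i,j}\in R\setminus\{0\}$ with $x_jx_i-c_{i,j}x_ix_j\in R+Rx_1+\cdots+Rx_n$. For each $i$ there are then an injective ring endomorphism $\sigma_i$ of $R$ and a $\sigma_i$-derivation $\delta_i$ of $R$ with $x_ir=\sigma_i(r)x_i+\delta_i(r)$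 for all $r\in R$. $A$ is bijective if every $\sigma_i$ is bijective and every $c_{i,j}$ is invertible. $A$ is quasi-commutative if conditions (3),(4) are replaced by: for every $i$ and $r\in R\setminus\{0\}$ there is $c_{i,r}\in R\setminus\{0\}$ with $x_ir=c_{i,r}x_i$, and for every $i,j$ there is $c_{i,j}\in R\setminus\{0\}$ with $x_jx_i=c_{i,j}x_ix_j$ (so all $\delta_i=0$). Under these hypotheses $A$ is a domain. An element $f$ of a ring $B$ is normal if $Bf=fB$. *)

theory Defs
  imports Main
begin

text \<open>Rings are modelled as types of class ring_1 (the ring A is the whole type);
  the coefficient ring R is a subset of A which is a subring.\<close>

definition subring :: "'a::ring_1 set \<Rightarrow> bool" where
  "subring R \<longleftrightarrow> 0 \<in> R \<and> 1 \<in> R \<and>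
     (\<forall>a\<in>R. \<forall>b\<in>R. a + b \<in> R \<and> - a \<in> R \<and> a * b \<in> R)"

definition ring_domain :: "'a::ring_1 set \<Rightarrow> bool" where
  "ring_domain R \<longleftrightarrow> (1::'a) \<noteq> 0 \<and> (\<forall>a\<in>R. \<forall>b\<in>R. a * b = 0 \<longrightarrow> a = 0 \<or> b = 0)"

definition left_ideal :: "'a::ring_1 set \<Rightarrow> 'a set \<Rightarrow> bool" where
  "left_ideal R I \<longleftrightarrow> I \<subseteq> R \<and> 0 \<in> I \<and>
     (\<forall>a\<in>I. \<forall>b\<in>I. a + b \<in> I) \<and> (\<forall>r\<in>R. \<forall>a\<in>I. r * a \<in> I)"

definition left_noetherian :: "'a::ring_1 set \<Rightarrow> bool" where
  "left_noetherian R \<longleftrightarrow>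
     (\<forall>I :: nat \<Rightarrow> 'a set. (\<forall>k. left_ideal R (I k)) \<and> (\<forall>k. I k \<subseteq> I (Suc k))
        \<longrightarrow> (\<exists>m. \<forall>k\<ge>m. I k = I m))"

definition exps :: "nat \<Rightarrow> (nat \<Rightarrow> nat) set" where
  "exps n = {\<alpha>. \<forall>i\<ge>n. \<alpha> i = 0}"

definition mon :: "(nat \<Rightarrow> 'a::ring_1) \<Rightarrow> nat \<Rightarrow> (nat \<Rightarrow> nat) \<Rightarrow> 'a" where
  "mon x n \<alpha> = prod_list (map (\<lambda>i. x i ^ \<alpha> i) [0..<n])"

definition left_free_mon_basis :: "'a::ring_1 set \<Rightarrow> (nat \<Rightarrow> 'a) \<Rightarrow> nat \<Rightarrow> bool" where
  "left_free_mon_basis R x n \<longleftrightarrow>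
     (\<forall>f::'a. \<exists>!c :: (nat \<Rightarrow> nat) \<Rightarrow> 'a.
        (\<forall>\<alpha>. c \<alpha> \<in> R) \<and> finite {\<alpha>. c \<alpha> \<noteq> 0} \<and> {\<alpha>. c \<alpha> \<noteq> 0} \<subseteq> exps n \<and>
        f = (\<Sum>\<alpha>\<in>{\<alpha>. c \<alpha> \<noteq> 0}. c \<alpha> * mon x n \<alpha>))"

definition unit_in :: "'a::ring_1 set \<Rightarrow> 'a \<Rightarrow> bool" where
  "unit_in R c \<longleftrightarrow> c \<in> R \<and> (\<exists>d\<in>R. c * d = 1 \<and> d * c = 1)"

definition normal_in :: "'a::ring_1 set \<Rightarrow> 'a \<Rightarrow> bool" where
  "normal_in B f \<longleftrightarrow> (\<lambda>b. b * f) ` B = (\<lambda>b. f * b) ` B"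

definition center :: "'a::ring_1 set" where
  "center = {h. \<forall>a. a * h = h * a}"

definition sigma :: "'a::ring_1 set \<Rightarrow> (nat \<Rightarrow> 'a) \<Rightarrow> nat \<Rightarrow> 'a \<Rightarrow> 'a" where
  "sigma R x i r = (THE s. s \<in> R \<and> x i * r = s * x i)"

definition qc_bij_skew_PBW :: "'a::ring_1 set \<Rightarrow> (nat \<Rightarrow> 'a) \<Rightarrow> nat \<Rightarrow> bool" where
  "qc_bij_skew_PBW R x n \<longleftrightarrow>
     subring R \<and> left_free_mon_basis R x n \<and>
     (\<forall>i<n. \<forall>r\<in>R - {0}. \<exists>c\<in>R - {0}. x i * r = c * x i) \<and>
     (\<forall>i<n. \<forall>j<n. \<exists>c\<in>R - {0}. x j * x i = c * x i * x j) \<and>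
     (\<forall>i<n. bij_betw (sigma R x i) R R) \<and>
     (\<forall>i<n. \<forall>j<n. \<exists>c. unit_in R c \<and> x j * x i = c * x i * x j)"

end

theory Submission
  imports Defs
begin


locale pbw =
  fixes R :: "'a::ring_1 set" and x :: "nat \<Rightarrow> 'a" and n :: nat
  assumes dom: "ring_domain R" and qc: "qc_bij_skew_PBW R x n"
begin

lemma sub: "subring R" using qc unfolding qc_bij_skew_PBW_def by blast
lemma R0: "0 \<in> R" using sub unfolding subring_def by blast
lemma R1: "1 \<in> R" using sub unfolding subring_def by blast
lemma Radd: "a \<in> R \<Longrightarrow> b \<in> R \<Longrightarrow> a + b \<in> R" using sub unfolding subring_def by blast
lemma Rmult: "a \<in> R \<Longrightarrow> b \<in> R \<Longrightarrow> a * b \<in> R" using sub unfolding subring_def by blast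
lemma one_ne: "(1::'a) \<noteq> 0" using dom unfolding ring_domain_def by blast
lemma Rdom: "a \<in> R \<Longrightarrow> b \<in> R \<Longrightarrow> a \<noteq> 0 \<Longrightarrow> b \<noteq> 0 \<Longrightarrow> a * b \<noteq> 0"
  using dom unfolding ring_domain_def by blast

lemma sum_R: "finite I \<Longrightarrow> (\<And>i. i \<in> I \<Longrightarrow> g i \<in> R) \<Longrightarrow> sum g I \<in> R"
  by (induction I rule: finite_induct) (auto intro: Radd R0)

definition rep :: "((nat \<Rightarrow> nat) \<Rightarrow> 'a) \<Rightarrow> 'a \<Rightarrow> bool" where
  "rep c a \<longleftrightarrow> (\<forall>\<alpha>. c \<alpha> \<in> R) \<and> finite {\<alpha>. c \<alpha> \<noteq> 0} \<and> {\<alpha>. c \<alpha> \<noteq> 0} \<subseteq> exps n \<and>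
        a = (\<Sum>\<alpha>\<in>{\<alpha>. c \<alpha> \<noteq> 0}. c \<alpha> * mon x n \<alpha>)"

definition coef :: "'a \<Rightarrow> (nat \<Rightarrow> nat) \<Rightarrow> 'a" where
  "coef a = (THE c. rep c a)"

lemma rep_ex1: "\<exists>!c. rep c a"
  using qc unfolding qc_bij_skew_PBW_def left_free_mon_basis_def rep_def by blast

lemma rep_coef: "rep (coef a) a" unfolding coef_def using rep_ex1 by (rule theI')

lemma coef_eq: "rep c a \<Longrightarrow> coef a = c"
  unfolding coef_def by (rule the1_equality[OF rep_ex1])

lemma coef_R: "coef a \<alpha> \<in> R" using rep_coef unfolding rep_def by blast
lemma coef_fin: "finite {\<alpha>. coef a \<alpha> \<noteq> 0}" using rep_coef unfolding rep_def by blast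
lemma coef_exps: "{\<alpha>. coef a \<alpha> \<noteq> 0} \<subseteq> exps n" using rep_coef unfolding rep_def by blast
lemma coef_sum: "a = (\<Sum>\<alpha>\<in>{\<alpha>. coef a \<alpha> \<noteq> 0}. coef a \<alpha> * mon x n \<alpha>)"
  using rep_coef unfolding rep_def by blast

lemma coef_from_sum:
  assumes "finite F" "F \<subseteq> exps n" "\<forall>\<alpha>. c \<alpha> \<in> R" "{\<alpha>. c \<alpha> \<noteq> 0} \<subseteq> F"
  shows "coef (\<Sum>\<alpha>\<in>F. c \<alpha> * mon x n \<alpha>) = c"
proof -
  have "(\<Sum>\<alpha>\<in>F. c \<alpha> * mon x n \<alpha>) = (\<Sum>\<alpha>\<in>{\<alpha>. c \<alpha> \<noteq> 0}. c \<alpha> * mon x n \<alpha>)"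
    by (rule sum.mono_neutral_right) (use assms in auto)
  moreover have "rep c (\<Sum>\<alpha>\<in>{\<alpha>. c \<alpha> \<noteq> 0}. c \<alpha> * mon x n \<alpha>)"
    unfolding rep_def using assms finite_subset by blast
  ultimately show ?thesis using coef_eq by simp
qed

lemma coef_sum_gen:
  assumes "finite I" "\<forall>i\<in>I. r i \<in> R" "\<forall>i\<in>I. \<gamma> i \<in> exps n"
  shows "coef (\<Sum>i\<in>I. r i * mon x n (\<gamma> i)) = (\<lambda>\<delta>. \<Sum>i\<in>{i\<in>I. \<gamma> i = \<delta>}. r i)"
proof -
  define c where "c = (\<lambda>\<delta>. \<Sum>i\<in>{i\<in>I. \<gamma> i = \<delta>}. r i)"
  have "(\<Sum>i\<in>I. r i * mon x n (\<gamma> i)) = (\<Sum>\<delta>\<in>\<gamma>`I. \<Sum>i\<in>{i. i\<in>I \<and> \<gamma> i = \<delta>}. r i * mon x n (\<gamma> i))"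
    by (rule sum.image_gen[OF assms(1)])
  also have "\<dots> = (\<Sum>\<delta>\<in>\<gamma>`I. c \<delta> * mon x n \<delta>)"
    unfolding c_def by (rule sum.cong) (auto simp: sum_distrib_right)
  finally have eq: "(\<Sum>i\<in>I. r i * mon x n (\<gamma> i)) = (\<Sum>\<delta>\<in>\<gamma>`I. c \<delta> * mon x n \<delta>)" .
  have "coef (\<Sum>\<delta>\<in>\<gamma>`I. c \<delta> * mon x n \<delta>) = c"
  proof (rule coef_from_sum)
    show "finite (\<gamma>`I)" using assms by simp
    show "\<gamma>`I \<subseteq> exps n" using assms by auto
    show "\<forall>\<alpha>. c \<alpha> \<in> R" unfolding c_def using assms by (auto intro!: sum_R)
    show "{\<alpha>. c \<alpha> \<noteq> 0} \<subseteq> \<gamma>`I"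
    proof
      fix \<delta> assume "\<delta> \<in> {\<alpha>. c \<alpha> \<noteq> 0}"
      then have "{i\<in>I. \<gamma> i = \<delta>} \<noteq> {}" unfolding c_def by force
      then show "\<delta> \<in> \<gamma>`I" by auto
    qed
  qed
  then show ?thesis using eq c_def by simp
qed

lemma coef_single: "r \<in> R \<Longrightarrow> \<gamma> \<in> exps n \<Longrightarrow> coef (r * mon x n \<gamma>) = (\<lambda>\<delta>. if \<delta> = \<gamma> then r else 0)"
proof -
  assume r: "r \<in> R" and g: "\<gamma> \<in> exps n"
  have "\<forall>\<alpha>. (if \<alpha> = \<gamma> then r else 0) \<in> R" using r R0 by auto
  moreover have "{\<alpha>. (if \<alpha> = \<gamma> then r else 0) \<noteq> 0} \<subseteq> {\<gamma>}" by auto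
  ultimately show ?thesis
    using coef_from_sum[of "{\<gamma>}" "\<lambda>\<delta>. if \<delta> = \<gamma> then r else 0"] g by simp
qed

lemma mon_cancel: "r \<in> R \<Longrightarrow> s \<in> R \<Longrightarrow> \<gamma> \<in> exps n \<Longrightarrow> r * mon x n \<gamma> = s * mon x n \<gamma> \<Longrightarrow> r = s"
  by (metis coef_single)

lemma coef_zero: "coef 0 = (\<lambda>_. 0)"
  using coef_from_sum[of "{}" "\<lambda>_. 0"] R0 by auto

lemma mon0: "mon x n (\<lambda>_. 0) = 1"
proof -
  have "\<And>m. prod_list (map (\<lambda>i. x i ^ (0::nat)) [0..<m]) = 1"
    by (induct_tac m) auto
  then show ?thesis unfolding mon_def by simp
qed

definition e :: "nat \<Rightarrow> nat \<Rightarrow> nat" where "e i = (\<lambda>j. if j = i then 1 else 0)"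

lemma e_exps: "i < n \<Longrightarrow> e i \<in> exps n" unfolding e_def exps_def by auto

lemma mon_e: "i < n \<Longrightarrow> mon x n (e i) = x i"
proof -
  have "\<And>m. prod_list (map (\<lambda>j. x j ^ e i j) [0..<m]) = (if i < m then x i else 1)"
  proof -
    fix m show "prod_list (map (\<lambda>j. x j ^ e i j) [0..<m]) = (if i < m then x i else 1)"
      by (induction m) (auto simp: e_def less_Suc_eq)
  qed
  then show "i < n \<Longrightarrow> ?thesis" unfolding mon_def by simp
qed

lemma x_cancel: "i < n \<Longrightarrow> s \<in> R \<Longrightarrow> s' \<in> R \<Longrightarrow> s * x i = s' * x i \<Longrightarrow> s = s'"
  using mon_cancel[of s s' "e i"] mon_e e_exps by simp

lemma xr_ex: "i < n \<Longrightarrow> r \<in> R \<Longrightarrow> \<exists>s\<in>R. x i * r = s * x i \<and> (r \<noteq> 0 \<longrightarrow> s \<noteq> 0)"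
proof -
  assume i: "i < n" and r: "r \<in> R"
  show ?thesis
  proof (cases "r = 0")
    case True then show ?thesis using R0 by (intro bexI[of _ 0]) auto
  next
    case False
    then show ?thesis using qc i r unfolding qc_bij_skew_PBW_def by blast
  qed
qed

lemma sigma: "i < n \<Longrightarrow> r \<in> R \<Longrightarrow> sigma R x i r \<in> R \<and> x i * r = sigma R x i r * x i"
proof -
  assume i: "i < n" and r: "r \<in> R"
  have "\<exists>!s. s \<in> R \<and> x i * r = s * x i"
    using xr_ex[OF i r] x_cancel[OF i] by metis
  then show ?thesis unfolding sigma_def by (rule theI')
qed

lemma x_surj: "i < n \<Longrightarrow> s \<in> R \<Longrightarrow> \<exists>r\<in>R. x i * r = s * x i"
proof -
  assume i: "i < n" and s: "s \<in> R"
  have "bij_betw (sigma R x i) R R" using qc i unfolding qc_bij_skew_PBW_def by blast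
  then have "sigma R x i ` R = R" by (simp add: bij_betw_def)
  then obtain r where "r \<in> R" "s = sigma R x i r" using s by blast
  then show ?thesis using sigma[OF i] by metis
qed

end

context pbw begin

lemma unit_mult: "unit_in R u \<Longrightarrow> unit_in R v \<Longrightarrow> unit_in R (u * v)"
  unfolding unit_in_def
proof (elim conjE bexE)
  fix d d' assume *: "u \<in> R" "d \<in> R" "u * d = 1" "d * u = 1" "v \<in> R" "d' \<in> R" "v * d' = 1" "d' * v = 1"
  have "(u * v) * (d' * d) = 1" by (simp add: mult.assoc[symmetric] *) (metis * mult.assoc mult_1_right)
  moreover have "(d' * d) * (u * v) = 1" by (metis * mult.assoc mult_1_left)
  ultimately show "u * v \<in> R \<and> (\<exists>d\<in>R. u * v * d = 1 \<and> d * (u * v) = 1)"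
    using * Rmult by blast
qed

lemma unit_1: "unit_in R 1" unfolding unit_in_def using R1 by auto

lemma unit_R: "unit_in R u \<Longrightarrow> u \<in> R" unfolding unit_in_def by blast

lemma mult_unit_ne: "unit_in R u \<Longrightarrow> a \<noteq> 0 \<Longrightarrow> a * u \<noteq> 0"
  unfolding unit_in_def by (metis mult.assoc mult_1_right mult_zero_left)

definition Tw :: "'a \<Rightarrow> bool" where
  "Tw a \<longleftrightarrow> (\<forall>r\<in>R. \<exists>s\<in>R. a * r = s * a \<and> (r \<noteq> 0 \<longrightarrow> s \<noteq> 0) \<and> (unit_in R r \<longrightarrow> unit_in R s))
     \<and> (\<forall>s\<in>R. \<exists>r\<in>R. a * r = s * a)"

lemma Tw_1: "Tw 1" unfolding Tw_def by auto

lemma Tw_mult: assumes "Tw a" "Tw b" shows "Tw (a * b)"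
  unfolding Tw_def
proof (intro conjI ballI)
  fix r assume r: "r \<in> R"
  obtain s where s: "s \<in> R" "b * r = s * b" "r \<noteq> 0 \<longrightarrow> s \<noteq> 0" "unit_in R r \<longrightarrow> unit_in R s"
    using assms(2) r unfolding Tw_def by blast
  obtain s' where s': "s' \<in> R" "a * s = s' * a" "s \<noteq> 0 \<longrightarrow> s' \<noteq> 0" "unit_in R s \<longrightarrow> unit_in R s'"
    using assms(1) s(1) unfolding Tw_def by blast
  have "a * b * r = s' * (a * b)" by (simp add: mult.assoc s(2)) (simp add: mult.assoc[symmetric] s'(2))
  then show "\<exists>s\<in>R. a * b * r = s * (a * b) \<and> (r \<noteq> 0 \<longrightarrow> s \<noteq> 0) \<and> (unit_in R r \<longrightarrow> unit_in R s)"
    using s s' by blast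
next
  fix s assume s: "s \<in> R"
  obtain r1 where r1: "r1 \<in> R" "a * r1 = s * a" using assms(1) s unfolding Tw_def by blast
  obtain r where r: "r \<in> R" "b * r = r1 * b" using assms(2) r1(1) unfolding Tw_def by blast
  have "a * b * r = s * (a * b)" by (simp add: mult.assoc r(2)) (simp add: mult.assoc[symmetric] r1(2))
  then show "\<exists>r\<in>R. a * b * r = s * (a * b)" using r by blast
qed

lemma Tw_x: assumes i: "i < n" shows "Tw (x i)"
  unfolding Tw_def
proof (intro conjI ballI)
  fix r assume r: "r \<in> R"
  obtain s where s: "s \<in> R" "x i * r = s * x i" "r \<noteq> 0 \<longrightarrow> s \<noteq> 0" using xr_ex[OF i r] by blast
  have "unit_in R s" if u: "unit_in R r"
  proof -
    obtain d where d: "d \<in> R" "r * d = 1" "d * r = 1" using u unfolding unit_in_def by blast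
    obtain s' where s': "s' \<in> R" "x i * d = s' * x i" using xr_ex[OF i d(1)] by blast
    have "(s * s') * x i = 1 * x i"
      by (metis d(2) mult.assoc mult_1_left mult_1_right s'(2) s(2))
    then have 1: "s * s' = 1" using x_cancel[OF i] Rmult s s' R1 by blast
    have "(s' * s) * x i = 1 * x i"
      by (metis d(3) mult.assoc mult_1_left mult_1_right s'(2) s(2))
    then have 2: "s' * s = 1" using x_cancel[OF i] Rmult s s' R1 by blast
    show ?thesis unfolding unit_in_def using 1 2 s s' by blast
  qed
  then show "\<exists>s\<in>R. x i * r = s * x i \<and> (r \<noteq> 0 \<longrightarrow> s \<noteq> 0) \<and> (unit_in R r \<longrightarrow> unit_in R s)"
    using s by blast
next
  fix s assume "s \<in> R" then show "\<exists>r\<in>R. x i * r = s * x i" using x_surj[OF i] by blast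
qed

lemma Tw_pow: "Tw a \<Longrightarrow> Tw (a ^ k)"
  by (induction k) (auto intro: Tw_1 Tw_mult)

lemma Tw_prod_list: "(\<And>y. y \<in> set l \<Longrightarrow> Tw y) \<Longrightarrow> Tw (prod_list l)"
  by (induction l) (auto intro: Tw_1 Tw_mult)

definition P :: "nat \<Rightarrow> (nat \<Rightarrow> nat) \<Rightarrow> 'a" where
  "P m \<gamma> = prod_list (map (\<lambda>i. x i ^ \<gamma> i) [0..<m])"

lemma P_n: "P n \<gamma> = mon x n \<gamma>" unfolding P_def mon_def by simp

lemma P_Suc: "P (Suc m) \<gamma> = P m \<gamma> * x m ^ \<gamma> m" unfolding P_def by simp

lemma P_cong: "(\<And>i. i < m \<Longrightarrow> \<gamma> i = \<gamma>' i) \<Longrightarrow> P m \<gamma> = P m \<gamma>'"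
  unfolding P_def by (intro arg_cong[where f=prod_list] map_cong) auto

lemma Tw_P: "m \<le> n \<Longrightarrow> Tw (P m \<gamma>)"
  unfolding P_def by (rule Tw_prod_list) (auto intro!: Tw_pow Tw_x)

lemma Tw_mon: "Tw (mon x n \<gamma>)" using Tw_P[of n \<gamma>] P_n by simp

lemma Tw_unit: "Tw a \<Longrightarrow> unit_in R u \<Longrightarrow> \<exists>v. unit_in R v \<and> a * u = v * a"
  unfolding Tw_def using unit_R by blast

lemma comm: "i < n \<Longrightarrow> j < n \<Longrightarrow> \<exists>c. unit_in R c \<and> x j * x i = c * x i * x j"
  using qc unfolding qc_bij_skew_PBW_def by blast

lemma comm_pow: assumes j: "j < n" and k: "k < n"
  shows "\<exists>c. unit_in R c \<and> x j * x k ^ m = c * x k ^ m * x j"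
proof (induction m)
  case 0 then show ?case using unit_1 by auto
next
  case (Suc m)
  then obtain c2 where c2: "unit_in R c2" "x j * x k ^ m = c2 * x k ^ m * x j" by blast
  obtain c1 where c1: "unit_in R c1" "x j * x k = c1 * x k * x j" using comm[OF k j] by blast
  obtain s where s: "unit_in R s" "x k * c2 = s * x k" using Tw_unit[OF Tw_x[OF k] c2(1)] by blast
  have "x j * x k ^ Suc m = (x j * x k) * x k ^ m" by (simp add: mult.assoc)
  also have "\<dots> = c1 * x k * (x j * x k ^ m)" by (simp add: c1(2) mult.assoc)
  also have "\<dots> = c1 * (x k * c2) * x k ^ m * x j" by (simp add: c2(2) mult.assoc)
  also have "\<dots> = (c1 * s) * x k ^ Suc m * x j" by (simp add: s(2) mult.assoc)
  finally show ?case using unit_mult[OF c1(1) s(1)] by blast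
qed

lemma x_P: assumes j: "j < n" shows "m \<le> n \<Longrightarrow> \<exists>u. unit_in R u \<and>
   x j * P m \<gamma> = (if j < m then u * P m (\<gamma>(j := \<gamma> j + 1)) else u * P m \<gamma> * x j)"
proof (induction m)
  case 0 then show ?case using unit_1 by (auto simp: P_def)
next
  case (Suc m)
  then have mn: "m < n" by simp
  obtain u where u: "unit_in R u"
    "x j * P m \<gamma> = (if j < m then u * P m (\<gamma>(j := \<gamma> j + 1)) else u * P m \<gamma> * x j)"
    using Suc by auto
  consider "j < m" | "j = m" | "j > m" by linarith
  then show ?case
  proof cases
    case 1
    have "x j * P (Suc m) \<gamma> = u * P m (\<gamma>(j := \<gamma> j + 1)) * x m ^ \<gamma> m"
      using u 1 by (simp add: P_Suc mult.assoc[symmetric])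
    also have "\<dots> = u * P (Suc m) (\<gamma>(j := \<gamma> j + 1))" using 1 by (simp add: P_Suc mult.assoc)
    finally show ?thesis using u 1 by auto
  next
    case 2
    have eq: "P m (\<gamma>(j := \<gamma> j + 1)) = P m \<gamma>" by (rule P_cong) (use 2 in auto)
    have "x j * P (Suc m) \<gamma> = u * P m \<gamma> * x m ^ Suc (\<gamma> m)"
      using u 2 by (simp add: P_Suc mult.assoc[symmetric])
    also have "\<dots> = u * P (Suc m) (\<gamma>(j := \<gamma> j + 1))" using 2 eq by (simp add: P_Suc mult.assoc)
    finally show ?thesis using u 2 by auto
  next
    case 3
    obtain c where c: "unit_in R c" "x j * x m ^ \<gamma> m = c * x m ^ \<gamma> m * x j"
      using comm_pow[OF j mn] by blast
    obtain s where s: "unit_in R s" "P m \<gamma> * c = s * P m \<gamma>"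
      using Tw_unit[OF Tw_P[of m] c(1)] mn by auto
    have "x j * P (Suc m) \<gamma> = (x j * P m \<gamma>) * x m ^ \<gamma> m"
      by (simp add: P_Suc mult.assoc)
    also have "\<dots> = u * P m \<gamma> * (x j * x m ^ \<gamma> m)"
      using u 3 by (simp add: mult.assoc)
    also have "\<dots> = u * (P m \<gamma> * c) * x m ^ \<gamma> m * x j" by (simp add: c(2) mult.assoc)
    also have "\<dots> = (u * s) * P (Suc m) \<gamma> * x j" by (simp add: s(2) P_Suc mult.assoc)
    finally show ?thesis using unit_mult[OF u(1) s(1)] 3 by auto
  qed
qed

lemma x_mon: "j < n \<Longrightarrow> \<exists>u. unit_in R u \<and> x j * mon x n \<gamma> = u * mon x n (\<gamma>(j := \<gamma> j + 1))"
  using x_P[of j n \<gamma>] by (auto simp: P_n)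

lemma xpow_mon: assumes j: "j < n"
  shows "\<exists>u. unit_in R u \<and> x j ^ k * mon x n \<gamma> = u * mon x n (\<gamma>(j := \<gamma> j + k))"
proof (induction k arbitrary: \<gamma>)
  case 0 then show ?case using unit_1 by auto
next
  case (Suc k)
  obtain u where u: "unit_in R u" "x j * mon x n \<gamma> = u * mon x n (\<gamma>(j := \<gamma> j + 1))"
    using x_mon[OF j] by blast
  obtain s where s: "unit_in R s" "x j ^ k * u = s * x j ^ k"
    using Tw_unit[OF Tw_pow[OF Tw_x[OF j]] u(1)] by blast
  obtain u' where u': "unit_in R u'" "x j ^ k * mon x n (\<gamma>(j := \<gamma> j + 1)) = u' * mon x n ((\<gamma>(j := \<gamma> j + 1))(j := (\<gamma>(j := \<gamma> j + 1)) j + k))"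
    using Suc by blast
  have "x j ^ Suc k * mon x n \<gamma> = x j ^ k * (x j * mon x n \<gamma>)" by (metis power_Suc2 mult.assoc)
  also have "\<dots> = (x j ^ k * u) * mon x n (\<gamma>(j := \<gamma> j + 1))" by (simp add: u(2) mult.assoc)
  also have "\<dots> = s * (x j ^ k * mon x n (\<gamma>(j := \<gamma> j + 1)))" by (simp add: s(2) mult.assoc)
  also have "\<dots> = (s * u') * mon x n ((\<gamma>(j := \<gamma> j + 1))(j := (\<gamma>(j := \<gamma> j + 1)) j + k))"
    by (simp only: u'(2) mult.assoc)
  also have "(\<gamma>(j := \<gamma> j + 1))(j := (\<gamma>(j := \<gamma> j + 1)) j + k) = \<gamma>(j := \<gamma> j + Suc k)" by simp
  finally show ?case using unit_mult[OF s(1) u'(1)] by blast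
qed

definition addf :: "(nat \<Rightarrow> nat) \<Rightarrow> (nat \<Rightarrow> nat) \<Rightarrow> nat \<Rightarrow> nat" where
  "addf \<alpha> \<beta> = (\<lambda>i. \<alpha> i + \<beta> i)"

lemma P_mon: "m \<le> n \<Longrightarrow> \<exists>u. unit_in R u \<and> P m \<alpha> * mon x n \<beta> = u * mon x n (\<lambda>i. if i < m then \<alpha> i + \<beta> i else \<beta> i)"
proof (induction m arbitrary: \<beta>)
  case 0 then show ?case using unit_1 by (auto simp: P_def)
next
  case (Suc m)
  then have mn: "m < n" by simp
  obtain u1 where u1: "unit_in R u1" "x m ^ \<alpha> m * mon x n \<beta> = u1 * mon x n (\<beta>(m := \<beta> m + \<alpha> m))"
    using xpow_mon[OF mn] by blast
  obtain s where s: "unit_in R s" "P m \<alpha> * u1 = s * P m \<alpha>"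
    using Tw_unit[OF Tw_P[of m] u1(1)] mn by auto
  obtain u2 where u2: "unit_in R u2" "P m \<alpha> * mon x n (\<beta>(m := \<beta> m + \<alpha> m)) =
      u2 * mon x n (\<lambda>i. if i < m then \<alpha> i + (\<beta>(m := \<beta> m + \<alpha> m)) i else (\<beta>(m := \<beta> m + \<alpha> m)) i)"
    using Suc by auto
  have feq: "(\<lambda>i. if i < m then \<alpha> i + (\<beta>(m := \<beta> m + \<alpha> m)) i else (\<beta>(m := \<beta> m + \<alpha> m)) i)
     = (\<lambda>i. if i < Suc m then \<alpha> i + \<beta> i else \<beta> i)" by (auto simp: less_Suc_eq)
  have "P (Suc m) \<alpha> * mon x n \<beta> = P m \<alpha> * (x m ^ \<alpha> m * mon x n \<beta>)" by (simp add: P_Suc mult.assoc)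
  also have "\<dots> = (P m \<alpha> * u1) * mon x n (\<beta>(m := \<beta> m + \<alpha> m))" by (simp add: u1(2) mult.assoc)
  also have "\<dots> = (s * u2) * mon x n (\<lambda>i. if i < Suc m then \<alpha> i + \<beta> i else \<beta> i)"
    by (simp add: s(2) mult.assoc u2(2) feq)
  finally show ?case using unit_mult[OF s(1) u2(1)] by blast
qed

lemma mon_mult: "\<alpha> \<in> exps n \<Longrightarrow> \<exists>u. unit_in R u \<and> mon x n \<alpha> * mon x n \<beta> = u * mon x n (addf \<alpha> \<beta>)"
proof -
  assume a: "\<alpha> \<in> exps n"
  have "(\<lambda>i. if i < n then \<alpha> i + \<beta> i else \<beta> i) = addf \<alpha> \<beta>"
    using a unfolding exps_def addf_def by (auto simp: not_less)
  then show ?thesis using P_mon[of n \<alpha> \<beta>] P_n by auto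
qed

lemma addf_exps: "\<alpha> \<in> exps n \<Longrightarrow> \<beta> \<in> exps n \<Longrightarrow> addf \<alpha> \<beta> \<in> exps n"
  unfolding exps_def addf_def by auto

end


definition lexless :: "(nat \<Rightarrow> nat) \<Rightarrow> (nat \<Rightarrow> nat) \<Rightarrow> bool" where
  "lexless \<alpha> \<beta> \<longleftrightarrow> (\<exists>k. \<alpha> k < \<beta> k \<and> (\<forall>i<k. \<alpha> i = \<beta> i))"

lemma lex_irrefl: "\<not> lexless \<alpha> \<alpha>" unfolding lexless_def by auto

lemma lex_trans: assumes "lexless \<alpha> \<beta>" "lexless \<beta> \<gamma>" shows "lexless \<alpha> \<gamma>"
proof -
  obtain k1 where k1: "\<alpha> k1 < \<beta> k1" "\<And>i. i<k1 \<Longrightarrow> \<alpha> i = \<beta> i" using assms(1) unfolding lexless_def by blast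
  obtain k2 where k2: "\<beta> k2 < \<gamma> k2" "\<And>i. i<k2 \<Longrightarrow> \<beta> i = \<gamma> i" using assms(2) unfolding lexless_def by blast
  define k where "k = min k1 k2"
  have "\<alpha> k < \<gamma> k"
  proof (cases "k1 < k2")
    case True then show ?thesis using k1(1) k2(2)[of k1] unfolding k_def by simp
  next
    case False
    then have "k = k2" unfolding k_def by simp
    show ?thesis
    proof (cases "k1 = k2")
      case True then show ?thesis using k1(1) k2(1) \<open>k = k2\<close> by simp
    next
      case False then have "k2 < k1" using \<open>\<not> k1 < k2\<close> by simp
      then show ?thesis using k1(2)[of k2] k2(1) \<open>k = k2\<close> by simp
    qed
  qed
  moreover have "\<alpha> i = \<gamma> i" if "i < k" for i
    using k1(2)[of i] k2(2)[of i] that unfolding k_def by simp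
  ultimately show ?thesis unfolding lexless_def by blast
qed

lemma lex_total: assumes "\<alpha> \<noteq> \<beta>" shows "lexless \<alpha> \<beta> \<or> lexless \<beta> \<alpha>"
proof -
  have ex: "\<exists>k. \<alpha> k \<noteq> \<beta> k" using assms by auto
  define k where "k = (LEAST k. \<alpha> k \<noteq> \<beta> k)"
  have 1: "\<alpha> k \<noteq> \<beta> k" unfolding k_def using ex by (rule LeastI_ex)
  have 2: "\<forall>i<k. \<alpha> i = \<beta> i" unfolding k_def using not_less_Least by blast
  show ?thesis unfolding lexless_def
  proof (cases "\<alpha> k < \<beta> k")
    case True then show "(\<exists>k. \<alpha> k < \<beta> k \<and> (\<forall>i<k. \<alpha> i = \<beta> i)) \<or> (\<exists>k. \<beta> k < \<alpha> k \<and> (\<forall>i<k. \<beta> i = \<alpha> i))"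
      using 2 by blast
  next
    case False then have "\<beta> k < \<alpha> k" using 1 by simp
    then show "(\<exists>k. \<alpha> k < \<beta> k \<and> (\<forall>i<k. \<alpha> i = \<beta> i)) \<or> (\<exists>k. \<beta> k < \<alpha> k \<and> (\<forall>i<k. \<beta> i = \<alpha> i))"
      using 2 by force
  qed
qed

lemma lex_zero: "\<not> lexless \<beta> (\<lambda>_. 0)" unfolding lexless_def by auto

lemma lex_max: "finite S \<Longrightarrow> S \<noteq> {} \<Longrightarrow> \<exists>m\<in>S. \<forall>\<beta>\<in>S. \<beta> = m \<or> lexless \<beta> m"
proof (induction S rule: finite_ne_induct)
  case (singleton y) then show ?case by auto
next
  case (insert y S)
  then obtain m where m: "m \<in> S" "\<forall>\<beta>\<in>S. \<beta> = m \<or> lexless \<beta> m" by blast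
  show ?case
  proof (cases "lexless m y")
    case True
    have "\<forall>\<beta>\<in>insert y S. \<beta> = y \<or> lexless \<beta> y"
    proof
      fix \<beta> assume "\<beta> \<in> insert y S"
      then consider "\<beta> = y" | "\<beta> = m" | "lexless \<beta> m" using m by blast
      then show "\<beta> = y \<or> lexless \<beta> y"
      proof cases
        case 3 then show ?thesis using True lex_trans by blast
      qed (use True in auto)
    qed
    then show ?thesis by blast
  next
    case False
    then have "y = m \<or> lexless y m" using lex_total by blast
    then have "\<forall>\<beta>\<in>insert y S. \<beta> = m \<or> lexless \<beta> m" using m(2) by blast
    then show ?thesis using m(1) by blast
  qed
qed


context pbw begin

lemma lex_addR: "lexless \<alpha> \<beta> \<Longrightarrow> lexless (addf \<alpha> \<gamma>) (addf \<beta> \<gamma>)"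
  unfolding lexless_def addf_def by auto
lemma lex_addL: "lexless \<alpha> \<beta> \<Longrightarrow> lexless (addf \<gamma> \<alpha>) (addf \<gamma> \<beta>)"
  unfolding lexless_def addf_def by auto

lemma key: assumes "\<alpha>' = \<alpha> \<or> lexless \<alpha>' \<alpha>" "\<beta>' = \<beta> \<or> lexless \<beta>' \<beta>" "addf \<alpha>' \<beta>' = addf \<alpha> \<beta>"
  shows "\<alpha>' = \<alpha> \<and> \<beta>' = \<beta>"
proof -
  have a: "\<alpha>' = \<alpha>"
  proof (rule ccontr)
    assume "\<alpha>' \<noteq> \<alpha>"
    then have l1: "lexless (addf \<alpha>' \<beta>') (addf \<alpha> \<beta>')" using assms(1) lex_addR by blast
    have "addf \<alpha> \<beta>' = addf \<alpha> \<beta> \<or> lexless (addf \<alpha> \<beta>') (addf \<alpha> \<beta>)" using assms(2) lex_addL by blast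
    then have "lexless (addf \<alpha>' \<beta>') (addf \<alpha> \<beta>)" using l1 lex_trans by metis
    then show False using assms(3) lex_irrefl by simp
  qed
  have "\<beta>' = \<beta>"
  proof
    fix i have "addf \<alpha>' \<beta>' i = addf \<alpha> \<beta> i" using assms(3) by simp
    then show "\<beta>' i = \<beta> i" using a unfolding addf_def by simp
  qed
  with a show ?thesis by simp
qed

lemma supp_ne: "a \<noteq> 0 \<Longrightarrow> {\<alpha>. coef a \<alpha> \<noteq> 0} \<noteq> {}"
proof
  assume "a \<noteq> 0" "{\<alpha>. coef a \<alpha> \<noteq> 0} = {}"
  then show False using coef_sum[of a] by simp
qed

lemma lead_prod:
  assumes a: "a \<noteq> 0" and b: "b \<noteq> 0"
  shows "\<exists>\<alpha>0 \<beta>0. coef a \<alpha>0 \<noteq> 0 \<and> coef b \<beta>0 \<noteq> 0 \<and>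
     (\<forall>\<alpha>'. coef a \<alpha>' \<noteq> 0 \<longrightarrow> \<alpha>' = \<alpha>0 \<or> lexless \<alpha>' \<alpha>0) \<and>
     (\<forall>\<beta>'. coef b \<beta>' \<noteq> 0 \<longrightarrow> \<beta>' = \<beta>0 \<or> lexless \<beta>' \<beta>0) \<and>
     coef (a * b) (addf \<alpha>0 \<beta>0) \<noteq> 0"
proof -
  define F where "F = {\<alpha>. coef a \<alpha> \<noteq> 0}"
  define G where "G = {\<beta>. coef b \<beta> \<noteq> 0}"
  have Ff: "finite F" "F \<noteq> {}" "F \<subseteq> exps n" unfolding F_def using coef_fin supp_ne[OF a] coef_exps by auto
  have Gf: "finite G" "G \<noteq> {}" "G \<subseteq> exps n" unfolding G_def using coef_fin supp_ne[OF b] coef_exps by auto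
  obtain \<alpha>0 where a0: "\<alpha>0 \<in> F" "\<forall>\<alpha>'\<in>F. \<alpha>' = \<alpha>0 \<or> lexless \<alpha>' \<alpha>0" using lex_max[OF Ff(1,2)] by blast
  obtain \<beta>0 where b0: "\<beta>0 \<in> G" "\<forall>\<beta>'\<in>G. \<beta>' = \<beta>0 \<or> lexless \<beta>' \<beta>0" using lex_max[OF Gf(1,2)] by blast
  define s where "s = (\<lambda>\<alpha> \<beta>. SOME s. s \<in> R \<and> mon x n \<alpha> * coef b \<beta> = s * mon x n \<alpha> \<and> (coef b \<beta> \<noteq> 0 \<longrightarrow> s \<noteq> 0))"
  define u where "u = (\<lambda>\<alpha> \<beta>. SOME u. unit_in R u \<and> mon x n \<alpha> * mon x n \<beta> = u * mon x n (addf \<alpha> \<beta>))"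
  have sP: "s \<alpha> \<beta> \<in> R \<and> mon x n \<alpha> * coef b \<beta> = s \<alpha> \<beta> * mon x n \<alpha> \<and> (coef b \<beta> \<noteq> 0 \<longrightarrow> s \<alpha> \<beta> \<noteq> 0)" for \<alpha> \<beta>
  proof -
    have "\<exists>s. s \<in> R \<and> mon x n \<alpha> * coef b \<beta> = s * mon x n \<alpha> \<and> (coef b \<beta> \<noteq> 0 \<longrightarrow> s \<noteq> 0)"
      using Tw_mon[of \<alpha>] coef_R[of b \<beta>] unfolding Tw_def by blast
    then show ?thesis unfolding s_def by (rule someI_ex)
  qed
  have uP: "unit_in R (u \<alpha> \<beta>) \<and> mon x n \<alpha> * mon x n \<beta> = u \<alpha> \<beta> * mon x n (addf \<alpha> \<beta>)" if "\<alpha> \<in> exps n" for \<alpha> \<beta>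
    unfolding u_def by (rule someI_ex) (rule mon_mult[OF that])
  define r where "r = (\<lambda>p. coef a (fst p) * s (fst p) (snd p) * u (fst p) (snd p))"
  define \<gamma> where "\<gamma> = (\<lambda>p. addf (fst p) (snd p))"
  have "a * b = (\<Sum>\<alpha>\<in>F. coef a \<alpha> * mon x n \<alpha>) * (\<Sum>\<beta>\<in>G. coef b \<beta> * mon x n \<beta>)"
    using coef_sum[of a] coef_sum[of b] unfolding F_def G_def by simp
  also have "\<dots> = (\<Sum>\<alpha>\<in>F. \<Sum>\<beta>\<in>G. (coef a \<alpha> * mon x n \<alpha>) * (coef b \<beta> * mon x n \<beta>))"
    by (rule sum_product)
  also have "\<dots> = (\<Sum>\<alpha>\<in>F. \<Sum>\<beta>\<in>G. r (\<alpha>, \<beta>) * mon x n (\<gamma> (\<alpha>, \<beta>)))"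
  proof (intro sum.cong refl)
    fix \<alpha> \<beta> assume "\<alpha> \<in> F" "\<beta> \<in> G"
    then have ae: "\<alpha> \<in> exps n" using Ff by auto
    have "(coef a \<alpha> * mon x n \<alpha>) * (coef b \<beta> * mon x n \<beta>) = coef a \<alpha> * (mon x n \<alpha> * coef b \<beta>) * mon x n \<beta>"
      by (simp add: mult.assoc)
    also have "\<dots> = coef a \<alpha> * s \<alpha> \<beta> * (mon x n \<alpha> * mon x n \<beta>)" using sP[of \<alpha> \<beta>] by (simp add: mult.assoc)
    also have "\<dots> = r (\<alpha>, \<beta>) * mon x n (\<gamma> (\<alpha>, \<beta>))" using uP[OF ae, of \<beta>] by (simp add: r_def \<gamma>_def mult.assoc)
    finally show "(coef a \<alpha> * mon x n \<alpha>) * (coef b \<beta> * mon x n \<beta>) = r (\<alpha>, \<beta>) * mon x n (\<gamma> (\<alpha>, \<beta>))" .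
  qed
  also have "\<dots> = (\<Sum>p\<in>F \<times> G. r p * mon x n (\<gamma> p))"
    by (subst sum.cartesian_product) (simp add: case_prod_unfold)
  finally have ab: "a * b = (\<Sum>p\<in>F \<times> G. r p * mon x n (\<gamma> p))" .
  have rR: "\<forall>p\<in>F \<times> G. r p \<in> R"
  proof
    fix p assume p: "p \<in> F \<times> G"
    then have "fst p \<in> exps n" using Ff by auto
    then show "r p \<in> R" unfolding r_def using Rmult coef_R sP uP unit_R by metis
  qed
  have gE: "\<forall>p\<in>F \<times> G. \<gamma> p \<in> exps n" unfolding \<gamma>_def using Ff Gf addf_exps by auto
  have c: "coef (a * b) (addf \<alpha>0 \<beta>0) = (\<Sum>p\<in>{p\<in>F \<times> G. \<gamma> p = addf \<alpha>0 \<beta>0}. r p)"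
    unfolding ab using coef_sum_gen[of "F \<times> G" r \<gamma>] Ff Gf rR gE by simp
  have "{p\<in>F \<times> G. \<gamma> p = addf \<alpha>0 \<beta>0} = {(\<alpha>0, \<beta>0)}"
  proof
    show "{p\<in>F \<times> G. \<gamma> p = addf \<alpha>0 \<beta>0} \<subseteq> {(\<alpha>0, \<beta>0)}"
    proof
      fix p assume "p \<in> {p\<in>F \<times> G. \<gamma> p = addf \<alpha>0 \<beta>0}"
      then have "fst p \<in> F" "snd p \<in> G" "addf (fst p) (snd p) = addf \<alpha>0 \<beta>0" unfolding \<gamma>_def by auto
      then have "fst p = \<alpha>0 \<and> snd p = \<beta>0" using key a0 b0 by blast
      then show "p \<in> {(\<alpha>0, \<beta>0)}" by (cases p) auto
    qed
    show "{(\<alpha>0, \<beta>0)} \<subseteq> {p\<in>F \<times> G. \<gamma> p = addf \<alpha>0 \<beta>0}" using a0 b0 \<gamma>_def by auto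
  qed
  then have c2: "coef (a * b) (addf \<alpha>0 \<beta>0) = r (\<alpha>0, \<beta>0)" using c by simp
  have a0e: "\<alpha>0 \<in> exps n" using a0 Ff by auto
  have "coef a \<alpha>0 * s \<alpha>0 \<beta>0 \<noteq> 0"
    using Rdom[OF coef_R _] sP[of \<alpha>0 \<beta>0] a0(1) b0(1) unfolding F_def G_def by blast
  then have "r (\<alpha>0, \<beta>0) \<noteq> 0" unfolding r_def using mult_unit_ne uP[OF a0e] by simp
  then show ?thesis using c2 a0 b0 unfolding F_def G_def
    by (intro exI[of _ \<alpha>0] exI[of _ \<beta>0]) auto
qed

lemma inR_b0: assumes "\<forall>\<beta>'. coef b \<beta>' \<noteq> 0 \<longrightarrow> \<beta>' = (\<lambda>_. 0)" shows "b \<in> R"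
proof -
  have "b = (\<Sum>\<alpha>\<in>{\<alpha>. coef b \<alpha> \<noteq> 0}. coef b \<alpha> * mon x n \<alpha>)" by (rule coef_sum)
  also have "\<dots> = (\<Sum>\<alpha>\<in>{\<lambda>_. 0}. coef b \<alpha> * mon x n \<alpha>)"
    by (rule sum.mono_neutral_left) (use assms in auto)
  also have "\<dots> = coef b (\<lambda>_. 0)" using mon0 by simp
  finally show ?thesis by (metis coef_R)
qed

lemma inR_right: assumes f: "f \<noteq> 0" and s: "\<forall>\<delta>. coef (f * b) \<delta> \<noteq> 0 \<longrightarrow> coef f \<delta> \<noteq> 0" shows "b \<in> R"
proof (cases "b = 0")
  case True then show ?thesis using R0 by simp
next
  case False
  obtain \<alpha>0 \<beta>0 where L: "coef f \<alpha>0 \<noteq> 0" "coef b \<beta>0 \<noteq> 0"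
     "\<forall>\<alpha>'. coef f \<alpha>' \<noteq> 0 \<longrightarrow> \<alpha>' = \<alpha>0 \<or> lexless \<alpha>' \<alpha>0"
     "\<forall>\<beta>'. coef b \<beta>' \<noteq> 0 \<longrightarrow> \<beta>' = \<beta>0 \<or> lexless \<beta>' \<beta>0"
     "coef (f * b) (addf \<alpha>0 \<beta>0) \<noteq> 0" using lead_prod[OF f False] by blast
  have le: "addf \<alpha>0 \<beta>0 = \<alpha>0 \<or> lexless (addf \<alpha>0 \<beta>0) \<alpha>0" using s L by blast
  have z: "\<beta>0 = (\<lambda>_. 0)"
  proof (rule ccontr)
    assume "\<beta>0 \<noteq> (\<lambda>_. 0)"
    then have "lexless (\<lambda>_. 0) \<beta>0" using lex_total lex_zero by blast
    then have "lexless (addf \<alpha>0 (\<lambda>_. 0)) (addf \<alpha>0 \<beta>0)" by (rule lex_addL)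
    moreover have "addf \<alpha>0 (\<lambda>_. 0) = \<alpha>0" unfolding addf_def by simp
    ultimately show False using le lex_trans lex_irrefl by metis
  qed
  show ?thesis using L(4) z lex_zero by (intro inR_b0) blast
qed

lemma inR_left: assumes f: "f \<noteq> 0" and s: "\<forall>\<delta>. coef (b * f) \<delta> \<noteq> 0 \<longrightarrow> coef f \<delta> \<noteq> 0" shows "b \<in> R"
proof (cases "b = 0")
  case True then show ?thesis using R0 by simp
next
  case False
  obtain \<beta>0 \<alpha>0 where L: "coef b \<beta>0 \<noteq> 0" "coef f \<alpha>0 \<noteq> 0"
     "\<forall>\<beta>'. coef b \<beta>' \<noteq> 0 \<longrightarrow> \<beta>' = \<beta>0 \<or> lexless \<beta>' \<beta>0"
     "\<forall>\<alpha>'. coef f \<alpha>' \<noteq> 0 \<longrightarrow> \<alpha>' = \<alpha>0 \<or> lexless \<alpha>' \<alpha>0"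
     "coef (b * f) (addf \<beta>0 \<alpha>0) \<noteq> 0" using lead_prod[OF False f] by blast
  have le: "addf \<beta>0 \<alpha>0 = \<alpha>0 \<or> lexless (addf \<beta>0 \<alpha>0) \<alpha>0" using s L by blast
  have z: "\<beta>0 = (\<lambda>_. 0)"
  proof (rule ccontr)
    assume "\<beta>0 \<noteq> (\<lambda>_. 0)"
    then have "lexless (\<lambda>_. 0) \<beta>0" using lex_total lex_zero by blast
    then have "lexless (addf (\<lambda>_. 0) \<alpha>0) (addf \<beta>0 \<alpha>0)" by (rule lex_addR)
    moreover have "addf (\<lambda>_. 0) \<alpha>0 = \<alpha>0" unfolding addf_def by simp
    ultimately show False using le lex_trans lex_irrefl by metis
  qed
  show ?thesis using L(3) z lex_zero by (intro inR_b0) blast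
qed

end

context pbw begin

definition Nrm :: "'a \<Rightarrow> bool" where
  "Nrm p \<longleftrightarrow> (\<forall>a. \<exists>b. a * p = p * b) \<and> (\<forall>a. \<exists>b. p * a = b * p)"

lemma Nrm_normal: "Nrm p \<Longrightarrow> normal_in UNIV p"
  unfolding Nrm_def normal_in_def
proof (elim conjE, intro equalityI subsetI)
  fix y assume A: "\<forall>a. \<exists>b. a * p = p * b" and "y \<in> range (\<lambda>b. b * p)"
  then obtain a where "y = a * p" by blast
  then show "y \<in> range (\<lambda>b. p * b)" using A by (metis rangeI)
next
  fix y assume A: "\<forall>a. \<exists>b. p * a = b * p" and "y \<in> range (\<lambda>b. p * b)"
  then obtain a where "y = p * a" by blast
  then show "y \<in> range (\<lambda>b. b * p)" using A by (metis rangeI)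
qed

lemma normal_Nrm: "normal_in UNIV p \<Longrightarrow> Nrm p"
  unfolding Nrm_def normal_in_def
proof (intro conjI allI)
  fix a assume E: "range (\<lambda>b. b * p) = range (\<lambda>b. p * b)"
  have "a * p \<in> range (\<lambda>b. b * p)" by blast
  then have "a * p \<in> range (\<lambda>b. p * b)" using E by simp
  then show "\<exists>b. a * p = p * b" by blast
next
  fix a assume E: "range (\<lambda>b. b * p) = range (\<lambda>b. p * b)"
  have "p * a \<in> range (\<lambda>b. p * b)" by blast
  then have "p * a \<in> range (\<lambda>b. b * p)" using E by simp
  then show "\<exists>b. p * a = b * p" by blast
qed

lemma Nrm_mult: assumes "Nrm p" "Nrm q" shows "Nrm (p * q)"
  unfolding Nrm_def
proof (intro conjI allI)
  fix a
  obtain b where b: "a * p = p * b" using assms(1) unfolding Nrm_def by blast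
  obtain b' where b': "b * q = q * b'" using assms(2) unfolding Nrm_def by blast
  have "a * (p * q) = p * q * b'" by (metis b b' mult.assoc)
  then show "\<exists>b. a * (p * q) = p * q * b" by blast
next
  fix a
  obtain b where b: "q * a = b * q" using assms(2) unfolding Nrm_def by blast
  obtain b' where b': "p * b = b' * p" using assms(1) unfolding Nrm_def by blast
  have "p * q * a = b' * (p * q)" by (metis b b' mult.assoc)
  then show "\<exists>b. p * q * a = b * (p * q)" by blast
qed

lemma Nrm_1: "Nrm 1" unfolding Nrm_def by auto

lemma Nrm_pow: "Nrm p \<Longrightarrow> Nrm (p ^ k)" by (induction k) (auto intro: Nrm_1 Nrm_mult)

lemma Nrm_prod_list: "(\<And>y. y \<in> set l \<Longrightarrow> Nrm y) \<Longrightarrow> Nrm (prod_list l)"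
  by (induction l) (auto intro: Nrm_1 Nrm_mult)

lemma Nrm_unit: assumes "unit_in R c" shows "Nrm c"
proof -
  obtain d where d: "c * d = 1" "d * c = 1" using assms unfolding unit_in_def by blast
  have "a * c = c * (d * a * c)" for a by (metis d(1) mult.assoc mult_1_left)
  moreover have "c * a = (c * a * d) * c" for a by (metis d(2) mult.assoc mult_1_right)
  ultimately show ?thesis unfolding Nrm_def by blast
qed

lemma Nrm_center: "h \<in> center \<Longrightarrow> Nrm h"
  unfolding center_def Nrm_def by auto

lemma gen: assumes S0: "0 \<in> S" and S1: "1 \<in> S" and Sadd: "\<And>a b. a \<in> S \<Longrightarrow> b \<in> S \<Longrightarrow> a + b \<in> S"
  and Smult: "\<And>a b. a \<in> S \<Longrightarrow> b \<in> S \<Longrightarrow> a * b \<in> S" and SR: "R \<subseteq> S"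
  and Sx: "\<And>k. k < n \<Longrightarrow> x k \<in> S"
  shows "a \<in> S"
proof -
  have pw: "y \<in> S \<Longrightarrow> y ^ k \<in> S" for y k by (induction k) (auto intro: S1 Smult)
  have pl: "(\<And>y. y \<in> set l \<Longrightarrow> y \<in> S) \<Longrightarrow> prod_list l \<in> S" for l
    by (induction l) (auto intro: S1 Smult)
  have mS: "mon x n \<gamma> \<in> S" for \<gamma> unfolding mon_def by (rule pl) (auto simp: pw Sx)
  have sS: "finite F \<Longrightarrow> (\<Sum>\<alpha>\<in>F. coef a \<alpha> * mon x n \<alpha>) \<in> S" for F
  proof (induction F rule: finite_induct)
    case empty then show ?case using S0 by simp
  next
    case (insert y F)
    have "coef a y * mon x n y \<in> S" using Smult SR coef_R mS by blast
    then show ?case using insert Sadd by simp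
  qed
  show ?thesis using coef_sum[of a] sS[OF coef_fin[of a]] by simp
qed

lemma Nrm_x: assumes i: "i < n" shows "Nrm (x i)"
proof -
  have A: "a \<in> {a. \<exists>b. x i * a = b * x i}" for a
  proof (rule gen)
    show "0 \<in> {a. \<exists>b. x i * a = b * x i}" by (auto intro: exI[of _ 0])
    show "1 \<in> {a. \<exists>b. x i * a = b * x i}" by (auto intro: exI[of _ 1])
    show "a + b \<in> {a. \<exists>b. x i * a = b * x i}" if H1: "a \<in> {a. \<exists>b. x i * a = b * x i}" and H2: "b \<in> {a. \<exists>b. x i * a = b * x i}" for a b
    proof -
      obtain c where c: "x i * a = c * x i" using H1 by blast
      obtain d where d: "x i * b = d * x i" using H2 by blast
      have "x i * (a + b) = (c + d) * x i" by (simp add: c d distrib_left distrib_right)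
      then show ?thesis by blast
    qed
    show "a * b \<in> {a. \<exists>b. x i * a = b * x i}" if H1: "a \<in> {a. \<exists>b. x i * a = b * x i}" and H2: "b \<in> {a. \<exists>b. x i * a = b * x i}" for a b
    proof -
      obtain c where c: "x i * a = c * x i" using H1 by blast
      obtain d where d: "x i * b = d * x i" using H2 by blast
      have "x i * (a * b) = (c * d) * x i" by (metis c d mult.assoc)
      then show ?thesis by blast
    qed
    show "R \<subseteq> {a. \<exists>b. x i * a = b * x i}" using xr_ex[OF i] by blast
    show "x k \<in> {a. \<exists>b. x i * a = b * x i}" if K: "k < n" for k
    proof -
      obtain c where "unit_in R c" "x i * x k = c * x k * x i" using comm[OF K i] by blast
      then show ?thesis by blast
    qed
  qed
  have B: "a \<in> {a. \<exists>b. a * x i = x i * b}" for a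
  proof (rule gen)
    show "0 \<in> {a. \<exists>b. a * x i = x i * b}" by (auto intro: exI[of _ 0])
    show "1 \<in> {a. \<exists>b. a * x i = x i * b}" by (auto intro: exI[of _ 1])
    show "a + b \<in> {a. \<exists>b. a * x i = x i * b}" if H1: "a \<in> {a. \<exists>b. a * x i = x i * b}" and H2: "b \<in> {a. \<exists>b. a * x i = x i * b}" for a b
    proof -
      obtain c where c: "a * x i = x i * c" using H1 by blast
      obtain d where d: "b * x i = x i * d" using H2 by blast
      have "(a + b) * x i = x i * (c + d)" by (simp add: c d distrib_left distrib_right)
      then show ?thesis by blast
    qed
    show "a * b \<in> {a. \<exists>b. a * x i = x i * b}" if H1: "a \<in> {a. \<exists>b. a * x i = x i * b}" and H2: "b \<in> {a. \<exists>b. a * x i = x i * b}" for a b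
    proof -
      obtain d where d: "b * x i = x i * d" using H2 by blast
      obtain c where c: "a * x i = x i * c" using H1 by blast
      have "(a * b) * x i = x i * (c * d)" by (metis c d mult.assoc)
      then show ?thesis by blast
    qed
    show "R \<subseteq> {a. \<exists>b. a * x i = x i * b}"
    proof
      fix s assume "s \<in> R"
      then obtain r where "x i * r = s * x i" using x_surj[OF i] by blast
      then have "s * x i = x i * r" by simp
      then show "s \<in> {a. \<exists>b. a * x i = x i * b}" by blast
    qed
    show "x k \<in> {a. \<exists>b. a * x i = x i * b}" if K: "k < n" for k
    proof -
      obtain c where c: "unit_in R c" "x k * x i = c * x i * x k" using comm[OF i K] by blast
      obtain c' where c': "x i * c' = c * x i" using x_surj[OF i unit_R[OF c(1)]] by blast
      have "x k * x i = x i * (c' * x k)" by (metis c(2) c' mult.assoc)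
      then show ?thesis by blast
    qed
  qed
  show ?thesis unfolding Nrm_def using A B by blast
qed

lemma Nrm_mon: "Nrm (mon x n \<gamma>)"
  unfolding mon_def by (rule Nrm_prod_list) (auto intro!: Nrm_pow Nrm_x)

lemma part1: "unit_in R c \<Longrightarrow> h \<in> center \<Longrightarrow> normal_in UNIV (c * mon x n \<alpha> * h)"
  by (intro Nrm_normal Nrm_mult Nrm_unit Nrm_mon Nrm_center)

end

context pbw begin

lemma part2:
  fixes t :: nat and c :: "nat \<Rightarrow> 'a" and \<alpha> :: "nat \<Rightarrow> nat \<Rightarrow> nat"
  assumes H: "\<forall>i\<in>{1..t}. c i \<in> R - {0} \<and> \<alpha> i \<in> exps n"
    and inj: "inj_on (\<lambda>i. mon x n (\<alpha> i)) {1..t}"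
    and nf: "normal_in UNIV (\<Sum>i=1..t. c i * mon x n (\<alpha> i))"
    and i0: "i0 \<in> {1..t}"
  shows "normal_in R (c i0)"
proof -
  define I where "I = {1..t}"
  define f where "f = (\<Sum>i\<in>I. c i * mon x n (\<alpha> i))"
  have fin: "finite I" unfolding I_def by simp
  have cR: "\<forall>j\<in>I. c j \<in> R" and c0: "\<forall>j\<in>I. c j \<noteq> 0" and aE: "\<forall>j\<in>I. \<alpha> j \<in> exps n"
    using H unfolding I_def by auto
  have injA: "inj_on \<alpha> I" using inj unfolding I_def inj_on_def by metis
  have single: "{i\<in>I. \<alpha> i = \<alpha> j} = {j}" if "j \<in> I" for j
    using injA that unfolding inj_on_def by auto
  have coefS: "coef (\<Sum>j\<in>I. g j * mon x n (\<alpha> j)) = (\<lambda>\<delta>. \<Sum>i\<in>{i\<in>I. \<alpha> i = \<delta>}. g i)"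
    if "\<forall>j\<in>I. g j \<in> R" for g
    using coef_sum_gen[OF fin that aE] .
  have coefA: "coef (\<Sum>j\<in>I. g j * mon x n (\<alpha> j)) (\<alpha> j) = g j" if "\<forall>j\<in>I. g j \<in> R" "j \<in> I" for g j
    using coefS[OF that(1)] single[OF that(2)] by simp
  have coefF: "coef f (\<alpha> j) = c j" if "j \<in> I" for j
    unfolding f_def using coefA[OF cR that] .
  have coefN: "coef f \<delta> \<noteq> 0" if g: "\<forall>j\<in>I. g j \<in> R" and nz: "coef (\<Sum>j\<in>I. g j * mon x n (\<alpha> j)) \<delta> \<noteq> 0" for g \<delta>
  proof -
    have "{i\<in>I. \<alpha> i = \<delta>} \<noteq> {}" using nz coefS[OF g] by force
    then obtain j where j: "j \<in> I" "\<alpha> j = \<delta>" by blast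
    then show ?thesis using coefF c0 by auto
  qed
  have i0I: "i0 \<in> I" using i0 I_def by simp
  have fne: "f \<noteq> 0"
  proof
    assume "f = 0"
    then have "coef f (\<alpha> i0) = 0" using coef_zero by simp
    then show False using coefF[OF i0I] c0 i0I by simp
  qed
  have Nf: "Nrm f" using normal_Nrm nf unfolding f_def I_def by simp
  have rmul: "\<exists>s. (\<forall>j. s j \<in> R) \<and> f * b = (\<Sum>j\<in>I. (c j * s j) * mon x n (\<alpha> j)) \<and>
      (\<forall>j. mon x n (\<alpha> j) * b = s j * mon x n (\<alpha> j))" if b: "b \<in> R" for b
  proof -
    define s where "s = (\<lambda>j. SOME s. s \<in> R \<and> mon x n (\<alpha> j) * b = s * mon x n (\<alpha> j))"
    have sP: "s j \<in> R \<and> mon x n (\<alpha> j) * b = s j * mon x n (\<alpha> j)" for j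
    proof -
      have "\<exists>s. s \<in> R \<and> mon x n (\<alpha> j) * b = s * mon x n (\<alpha> j)"
        using Tw_mon[of "\<alpha> j"] b unfolding Tw_def by blast
      then show ?thesis unfolding s_def by (rule someI_ex)
    qed
    have "f * b = (\<Sum>j\<in>I. c j * (mon x n (\<alpha> j) * b))"
      unfolding f_def by (simp add: sum_distrib_right mult.assoc)
    also have "\<dots> = (\<Sum>j\<in>I. (c j * s j) * mon x n (\<alpha> j))"
      using sP by (simp add: mult.assoc)
    finally show ?thesis using sP by blast
  qed
  have lmul: "b * f = (\<Sum>j\<in>I. (b * c j) * mon x n (\<alpha> j))" for b
    unfolding f_def by (simp add: sum_distrib_left mult.assoc)
  show ?thesis unfolding normal_in_def
  proof (intro equalityI subsetI)
    fix y assume "y \<in> (\<lambda>b. b * c i0) ` R"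
    then obtain r where r: "r \<in> R" "y = r * c i0" by blast
    obtain b where b: "r * f = f * b" using Nf unfolding Nrm_def by blast
    have gR: "\<forall>j\<in>I. r * c j \<in> R" using r cR Rmult by blast
    have bR: "b \<in> R"
    proof (rule inR_right[OF fne], intro allI impI)
      fix \<delta> assume "coef (f * b) \<delta> \<noteq> 0"
      then have "coef (\<Sum>j\<in>I. (r * c j) * mon x n (\<alpha> j)) \<delta> \<noteq> 0" using b lmul by simp
      then show "coef f \<delta> \<noteq> 0" using coefN[OF gR] by blast
    qed
    obtain s where s: "\<forall>j. s j \<in> R" "f * b = (\<Sum>j\<in>I. (c j * s j) * mon x n (\<alpha> j))"
      using rmul[OF bR] by blast
    have hR: "\<forall>j\<in>I. c j * s j \<in> R" using s cR Rmult by blast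
    have "r * c i0 = coef (r * f) (\<alpha> i0)" using coefA[OF gR i0I] lmul by simp
    also have "\<dots> = c i0 * s i0" using b s(2) coefA[OF hR i0I] by simp
    finally show "y \<in> (\<lambda>b. c i0 * b) ` R" using r s by auto
  next
    fix y assume "y \<in> (\<lambda>b. c i0 * b) ` R"
    then obtain r where r: "r \<in> R" "y = c i0 * r" by blast
    obtain r' where r': "r' \<in> R" "mon x n (\<alpha> i0) * r' = r * mon x n (\<alpha> i0)"
      using Tw_mon[of "\<alpha> i0"] r unfolding Tw_def by blast
    obtain b where b: "f * r' = b * f" using Nf unfolding Nrm_def by blast
    obtain s where s: "\<forall>j. s j \<in> R" "f * r' = (\<Sum>j\<in>I. (c j * s j) * mon x n (\<alpha> j))"
      "\<forall>j. mon x n (\<alpha> j) * r' = s j * mon x n (\<alpha> j)"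
      using rmul[OF r'(1)] by blast
    have hR: "\<forall>j\<in>I. c j * s j \<in> R" using s cR Rmult by blast
    have bR: "b \<in> R"
    proof (rule inR_left[OF fne], intro allI impI)
      fix \<delta> assume "coef (b * f) \<delta> \<noteq> 0"
      then have "coef (\<Sum>j\<in>I. (c j * s j) * mon x n (\<alpha> j)) \<delta> \<noteq> 0" using b s(2) by simp
      then show "coef f \<delta> \<noteq> 0" using coefN[OF hR] by blast
    qed
    have si0: "s i0 = r"
      using mon_cancel[of "s i0" r "\<alpha> i0"] s(1,3) r'(2) r(1) aE i0I by metis
    have gR: "\<forall>j\<in>I. b * c j \<in> R" using bR cR Rmult by blast
    have "c i0 * s i0 = coef (f * r') (\<alpha> i0)" using coefA[OF hR i0I] s(2) by simp
    also have "\<dots> = b * c i0" using b lmul coefA[OF gR i0I] by simp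
    finally show "y \<in> (\<lambda>b. b * c i0) ` R" using r si0 bR by auto
  qed
qed

end

theorem proposition4p22:
  fixes R :: "'a::ring_1 set" and x :: "nat \<Rightarrow> 'a" and n :: nat
  assumes "left_noetherian R" and "ring_domain R"
    and "qc_bij_skew_PBW R x n"
  shows "(\<forall>c \<alpha> h. unit_in R c \<and> normal_in R c \<and> \<alpha> \<in> exps n \<and> h \<in> center
            \<longrightarrow> normal_in UNIV (c * mon x n \<alpha> * h))
       \<and> (\<forall>(t::nat) (c::nat \<Rightarrow> 'a) (\<alpha>::nat \<Rightarrow> nat \<Rightarrow> nat).
            (\<forall>i\<in>{1..t}. c i \<in> R - {0} \<and> \<alpha> i \<in> exps n)
            \<and> inj_on (\<lambda>i. mon x n (\<alpha> i)) {1..t}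
            \<and> normal_in UNIV (\<Sum>i=1..t. c i * mon x n (\<alpha> i))
            \<longrightarrow> (\<forall>i\<in>{1..t}. normal_in R (c i)))"
proof -
  interpret pbw R x n using assms(2,3) by unfold_locales
  have 1: "\<forall>c \<alpha> h. unit_in R c \<and> normal_in R c \<and> \<alpha> \<in> exps n \<and> h \<in> center
            \<longrightarrow> normal_in UNIV (c * mon x n \<alpha> * h)"
    using part1 by blast
  have 2: "\<forall>(t::nat) (c::nat \<Rightarrow> 'a) (\<alpha>::nat \<Rightarrow> nat \<Rightarrow> nat).
            (\<forall>i\<in>{1..t}. c i \<in> R - {0} \<and> \<alpha> i \<in> exps n)
            \<and> inj_on (\<lambda>i. mon x n (\<alpha> i)) {1..t}
            \<and> normal_in UNIV (\<Sum>i=1..t. c i * mon x n (\<alpha> i))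
            \<longrightarrow> (\<forall>i\<in>{1..t}. normal_in R (c i))"
  proof (intro allI impI ballI)
    fix t :: nat and c :: "nat \<Rightarrow> 'a" and \<alpha> :: "nat \<Rightarrow> nat \<Rightarrow> nat" and i
    assume H: "(\<forall>i\<in>{1..t}. c i \<in> R - {0} \<and> \<alpha> i \<in> exps n)
            \<and> inj_on (\<lambda>i. mon x n (\<alpha> i)) {1..t}
            \<and> normal_in UNIV (\<Sum>i=1..t. c i * mon x n (\<alpha> i))" and i: "i \<in> {1..t}"
    show "normal_in R (c i)" using part2[of t c \<alpha> i] H i by blast
  qed
  show ?thesis using 1 2 by blast
qed

end
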